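(* There exists a constant $C>0$ such that for all $x>0$, \[ \sum_{k\in\mathbf{Z}}|k|\,J_k(x)^2\le C\,x . \]
   Context: For $n\in\mathbf{Z}$ and $z\in\mathbf{C}$, $J_n(z)=\frac{1}{2\pi}\int_{-\pi}^{\pi}e^{i(nu-z\sin u)}\,du$ is the Bessel function of the first kind. *)

theory Defs
  imports "HOL-Analysis.Analysis"
begin

definition besselJ :: "int \<Rightarrow> complex \<Rightarrow> complex" where
  "besselJ n z = integral {-pi..pi} (\<lambda>u::real. exp (\<i> * (of_int n * of_real u - z * of_real (sin u))))
                 / (2 * of_real pi)"

end

theory Submission imports Defs begin
lemma cis_vd:
  assumes "(\<phi> has_real_derivative d) (at u within s)"
  shows "((\<lambda>u. cis (\<phi> u)) has_vector_derivative (\<i> * of_real d * cis (\<phi> u))) (at u within s)"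
proof -
  have e: "\<And>u. cis (\<phi> u) = complex_of_real (cos (\<phi> u)) + \<i> * complex_of_real (sin (\<phi> u))"
    by (simp add: complex_eq_iff)
  have "((\<lambda>u. complex_of_real (cos (\<phi> u)) + \<i> * complex_of_real (sin (\<phi> u))) has_vector_derivative
     (complex_of_real (- sin (\<phi> u) * d) + \<i> * complex_of_real (cos (\<phi> u) * d))) (at u within s)"
    by (intro has_vector_derivative_add has_vector_derivative_mult_right has_vector_derivative_of_real)
       (auto intro!: derivative_eq_intros assms)
  moreover have "complex_of_real (- sin (\<phi> u) * d) + \<i> * complex_of_real (cos (\<phi> u) * d) = \<i> * of_real d * cis (\<phi> u)"
    by (simp add: complex_eq_iff)
  ultimately show ?thesis unfolding e by simp
qed

lemma orth:
  fixes m :: int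
  shows "integral {-pi..pi} (\<lambda>u. cis (of_int m * u)) = (if m = 0 then 2 * pi else 0)"
proof (cases "m = 0")
  case True then show ?thesis by (simp add: scaleR_conv_of_real)
next
  case False
  have "\<And>u. ((\<lambda>u. cis (of_int m * u) / (\<i> * of_int m)) has_vector_derivative cis (of_int m * u)) (at u within {-pi..pi})"
  proof -
    fix u
    have "((\<lambda>u. cis (of_int m * u)) has_vector_derivative (\<i> * of_real (of_int m) * cis (of_int m * u))) (at u within {-pi..pi})"
      by (rule cis_vd) (auto intro!: derivative_eq_intros)
    then have "((\<lambda>u. cis (of_int m * u) / (\<i> * of_int m)) has_vector_derivative (\<i> * of_real (of_int m) * cis (of_int m * u)) / (\<i> * of_int m)) (at u within {-pi..pi})"
      by (rule has_vector_derivative_divide)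
    then show "?thesis u" using False by simp
  qed
  then have "((\<lambda>u. cis (of_int m * u)) has_integral (cis (of_int m * pi) / (\<i> * of_int m) - cis (of_int m * (-pi)) / (\<i> * of_int m))) {-pi..pi}"
    by (intro fundamental_theorem_of_calculus) auto
  moreover have "cis (of_int m * pi) = cis (of_int m * (-pi))"
  proof -
    have "sin (of_int m * pi) = 0" using sin_times_pi_eq_0 by simp
    then show ?thesis by (simp add: cis.ctr)
  qed
  ultimately show ?thesis using False by (simp add: integral_unique)
qed

lemma orth2:
  fixes a b :: int
  shows "integral {-pi..pi} (\<lambda>u. cis ((of_int a - of_int b) * u)) = (if a = b then 2 * pi else 0)"
  using orth[of "a - b"] by simp

definition fc :: "(real \<Rightarrow> complex) \<Rightarrow> int \<Rightarrow> complex" where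
  "fc F k = integral {-pi..pi} (\<lambda>u. F u * cis (of_int k * u)) / (2 * of_real pi)"

lemma integral_of_real_I:
  fixes f :: "real \<Rightarrow> real"
  assumes "f integrable_on S"
  shows "integral S (\<lambda>x. complex_of_real (f x)) = of_real (integral S f)"
  using has_integral_of_real[OF integrable_integral[OF assms]] by (rule integral_unique)

lemma bessel:
  assumes cont: "continuous_on {-pi..pi} F"
    and bd: "\<And>u. u \<in> {-pi..pi} \<Longrightarrow> cmod (F u) \<le> M"
    and K: "finite K"
  shows "(\<Sum>k\<in>K. (cmod (fc F k))^2) \<le> M^2"
proof -
  define c where "c = fc F"
  define s where "s = (\<Sum>k\<in>K. (cmod (c k))^2)"
  define S where "S = (\<lambda>u. \<Sum>k\<in>K. c k * cis (- (of_int k * u)))"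
  have contS: "continuous_on {-pi..pi} S"
    unfolding S_def by (intro continuous_intros)
  have intF: "\<And>k. (\<lambda>u. F u * cis (of_int k * u)) integrable_on {-pi..pi}"
    by (intro integrable_continuous_interval continuous_intros cont)
  have cint: "\<And>k. integral {-pi..pi} (\<lambda>u. F u * cis (of_int k * u)) = 2 * of_real pi * c k"
    unfolding c_def fc_def by simp
  have nsq: "\<And>k. c k * cnj (c k) = (complex_of_real (cmod (c k)))^2"
    by (metis complex_norm_square of_real_power)
  have nsq2: "\<And>z. complex_of_real ((cmod z)^2) = z * cnj z"
    by (rule complex_norm_square)
  have a: "integral {-pi..pi} (\<lambda>u. F u * cnj (S u)) = 2 * of_real pi * of_real s"
  proof -
    have "integral {-pi..pi} (\<lambda>u. F u * cnj (S u)) = integral {-pi..pi} (\<lambda>u. \<Sum>k\<in>K. cnj (c k) * (F u * cis (of_int k * u)))"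
      unfolding S_def by (simp add: sum_distrib_left cis_cnj mult_ac)
    also have "\<dots> = (\<Sum>k\<in>K. cnj (c k) * (2 * of_real pi * c k))"
      using K by (subst integral_sum) (auto simp: cint intro!: integrable_continuous_interval continuous_intros cont)
    also have "\<dots> = 2 * of_real pi * of_real s"
      unfolding s_def by (simp add: sum_distrib_left mult_ac flip: nsq)
    finally show ?thesis .
  qed
  have b: "integral {-pi..pi} (\<lambda>u. S u * cnj (F u)) = 2 * of_real pi * of_real s"
  proof -
    have "integral {-pi..pi} (\<lambda>u. S u * cnj (F u)) = cnj (integral {-pi..pi} (\<lambda>u. F u * cnj (S u)))"
      by (simp add: integral_cnj mult.commute)
    then show ?thesis using a by simp
  qed
  have c: "integral {-pi..pi} (\<lambda>u. S u * cnj (S u)) = 2 * of_real pi * of_real s"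
  proof -
    have "integral {-pi..pi} (\<lambda>u. S u * cnj (S u)) = integral {-pi..pi} (\<lambda>u. \<Sum>k\<in>K. \<Sum>j\<in>K. c j * cnj (c k) * cis (of_int (k - j) * u))"
      unfolding S_def
      by (simp add: sum_distrib_left sum_distrib_right cis_cnj mult_ac cis_mult algebra_simps)
    also have "\<dots> = (\<Sum>k\<in>K. \<Sum>j\<in>K. c j * cnj (c k) * integral {-pi..pi} (\<lambda>u. cis (of_int (k - j) * u)))"
      using K
      by (simp add: integral_sum integrable_sum integrable_continuous_interval continuous_intros)
    also have "\<dots> = (\<Sum>k\<in>K. \<Sum>j\<in>K. if k = j then c j * cnj (c k) * (2 * of_real pi) else 0)"
      by (intro sum.cong refl) (simp add: orth2 scaleR_conv_of_real)
    also have "\<dots> = (\<Sum>k\<in>K. c k * cnj (c k) * (2 * of_real pi))"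
      using K by (simp add: sum.delta)
    also have "\<dots> = 2 * of_real pi * of_real s"
      unfolding s_def by (simp add: sum_distrib_left mult_ac flip: nsq)
    finally show ?thesis .
  qed
  have intD: "(\<lambda>u. (cmod (F u - S u))^2) integrable_on {-pi..pi}"
    by (intro integrable_continuous_interval continuous_intros cont contS)
  have intFF: "(\<lambda>u. (cmod (F u))^2) integrable_on {-pi..pi}"
    by (intro integrable_continuous_interval continuous_intros cont)
  have "complex_of_real (integral {-pi..pi} (\<lambda>u. (cmod (F u - S u))^2))
      = integral {-pi..pi} (\<lambda>u. (F u - S u) * cnj (F u - S u))"
    by (subst integral_of_real_I[OF intD, symmetric]) (simp only: nsq2)
  also have "\<dots> = integral {-pi..pi} (\<lambda>u. ((F u * cnj (F u) - F u * cnj (S u)) - S u * cnj (F u)) + S u * cnj (S u))"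
    by (simp add: algebra_simps)
  also have "\<dots> = integral {-pi..pi} (\<lambda>u. F u * cnj (F u)) - integral {-pi..pi} (\<lambda>u. F u * cnj (S u))
       - integral {-pi..pi} (\<lambda>u. S u * cnj (F u)) + integral {-pi..pi} (\<lambda>u. S u * cnj (S u))"
    by (simp add: integral_add integral_diff integrable_diff integrable_add integrable_continuous_interval continuous_intros cont contS)
  also have "integral {-pi..pi} (\<lambda>u. F u * cnj (F u)) = of_real (integral {-pi..pi} (\<lambda>u. (cmod (F u))^2))"
    by (subst integral_of_real_I[OF intFF, symmetric]) (simp only: nsq2)
  finally have eq0: "complex_of_real (integral {-pi..pi} (\<lambda>u. (cmod (F u - S u))^2)) = complex_of_real (integral {-pi..pi} (\<lambda>u. (cmod (F u))^2) - 2 * pi * s)"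
    unfolding a b c by simp
  then have eq: "integral {-pi..pi} (\<lambda>u. (cmod (F u - S u))^2) = integral {-pi..pi} (\<lambda>u. (cmod (F u))^2) - 2 * pi * s"
    using of_real_eq_iff by blast
  have "0 \<le> integral {-pi..pi} (\<lambda>u. (cmod (F u - S u))^2)"
    by (rule integral_nonneg[OF intD]) simp
  moreover have "integral {-pi..pi} (\<lambda>u. (cmod (F u))^2) \<le> integral {-pi..pi} (\<lambda>u. M^2)"
    by (rule integral_le[OF intFF]) (auto intro!: power_mono bd)
  moreover have "integral {-pi..pi} (\<lambda>u. M^2) = 2 * pi * M^2" by simp
  ultimately have "2 * pi * s \<le> 2 * pi * M^2" using eq by linarith
  then show ?thesis unfolding s_def c_def by simp
qed

lemma besselJ_fc0:
  "besselJ k (of_real x) = fc (\<lambda>u. cis (- (x * sin u))) k"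
proof -
  have "\<And>u. exp (\<i> * (of_int k * of_real u - of_real x * of_real (sin u))) = cis (- (x * sin u)) * cis (of_int k * u)"
  proof -
    fix u
    have "exp (\<i> * (of_int k * of_real u - of_real x * of_real (sin u))) = cis (- (x * sin u) + of_int k * u)"
      unfolding cis_conv_exp by (simp add: algebra_simps)
    then show "?thesis u" by (simp add: cis_mult)
  qed
  then show ?thesis unfolding besselJ_def fc_def by simp
qed

lemma besselJ_fc1:
  "of_int k * besselJ k (of_real x) = fc (\<lambda>u. of_real (x * cos u) * cis (- (x * sin u))) k"
proof -
  define G where "G = (\<lambda>u. cis (- (x * sin u)) * cis (of_int k * u))"
  have G: "\<And>u. G u = cis (of_int k * u - x * sin u)"
    unfolding G_def by (simp add: cis_mult)
  have intG: "G integrable_on {-pi..pi}" "(\<lambda>u. of_real (x * cos u) * G u) integrable_on {-pi..pi}"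
    unfolding G_def by (intro integrable_continuous_interval continuous_intros)+
  have der: "\<And>u. ((\<lambda>u. - \<i> * cis (of_int k * u - x * sin u)) has_vector_derivative
      (of_int k - of_real (x * cos u)) * G u) (at u within {-pi..pi})"
  proof -
    fix u
    have "((\<lambda>u. cis (of_int k * u - x * sin u)) has_vector_derivative (\<i> * of_real (of_int k - x * cos u) * cis (of_int k * u - x * sin u))) (at u within {-pi..pi})"
      by (rule cis_vd) (auto intro!: derivative_eq_intros)
    then have "((\<lambda>u. - \<i> * cis (of_int k * u - x * sin u)) has_vector_derivative - \<i> * (\<i> * of_real (of_int k - x * cos u) * cis (of_int k * u - x * sin u))) (at u within {-pi..pi})"
      by (rule has_vector_derivative_mult_right)
    then show "?thesis u" by (simp add: G algebra_simps)
  qed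
  have "((\<lambda>u. (of_int k - of_real (x * cos u)) * G u) has_integral
     (- \<i> * cis (of_int k * pi - x * sin pi) - - \<i> * cis (of_int k * (-pi) - x * sin (-pi)))) {-pi..pi}"
    by (rule fundamental_theorem_of_calculus) (use der in auto)
  moreover have "cis (of_int k * pi) = cis (of_int k * (-pi))"
  proof -
    have "sin (of_int k * pi) = 0" using sin_times_pi_eq_0 by simp
    then show ?thesis by (simp add: cis.ctr)
  qed
  ultimately have "integral {-pi..pi} (\<lambda>u. (of_int k - of_real (x * cos u)) * G u) = 0"
    by (simp add: integral_unique)
  then have "integral {-pi..pi} (\<lambda>u. of_int k * G u - of_real (x * cos u) * G u) = 0"
    by (simp add: algebra_simps)
  then have "of_int k * integral {-pi..pi} G = integral {-pi..pi} (\<lambda>u. of_real (x * cos u) * G u)"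
    using intG by (subst (asm) integral_diff) (auto intro: integrable_on_mult_right)
  then show ?thesis
    unfolding besselJ_fc0 fc_def G_def by (simp add: mult_ac)
qed

lemma finite_bound:
  fixes x :: real
  assumes x: "x > 0" and K: "finite K"
  shows "(\<Sum>k\<in>K. \<bar>real_of_int k\<bar> * (Re (besselJ k (of_real x)))\<^sup>2) \<le> x"
proof -
  define J where "J = (\<lambda>k. besselJ k (of_real x))"
  have c0: "continuous_on {-pi..pi} (\<lambda>u. cis (- (x * sin u)))"
    by (intro continuous_intros)
  have c1: "continuous_on {-pi..pi} (\<lambda>u. of_real (x * cos u) * cis (- (x * sin u)))"
    by (intro continuous_intros)
  have b0: "(\<Sum>k\<in>K. (cmod (J k))^2) \<le> 1"
    using c0 c1 bessel[of "\<lambda>u. cis (- (x * sin u))" 1 K] K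
    unfolding J_def besselJ_fc0 by (auto intro!: continuous_intros)
  have b1: "(\<Sum>k\<in>K. (cmod (of_int k * J k))^2) \<le> x^2"
    using c0 c1 bessel[of "\<lambda>u. of_real (x * cos u) * cis (- (x * sin u))" x K] K x
    unfolding J_def besselJ_fc1
    by (auto intro!: continuous_intros simp: norm_mult abs_mult)
  have pt: "\<bar>real_of_int k\<bar> * (Re (J k))\<^sup>2 \<le> ((cmod (of_int k * J k))^2 / x + x * (cmod (J k))^2) / 2" for k
  proof -
    define a where "a = cmod (J k)"
    have r: "(Re (J k))^2 \<le> a^2"
      unfolding a_def using abs_Re_le_cmod[of "J k"] abs_le_square_iff[of "Re (J k)" "cmod (J k)"] by simp
    have "2 * \<bar>real_of_int k\<bar> * x \<le> (real_of_int k)^2 + x^2"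
      using sum_squares_ge_zero[of "\<bar>real_of_int k\<bar> - x" 0]
      by (simp add: power2_eq_square algebra_simps)
    then have "\<bar>real_of_int k\<bar> \<le> ((real_of_int k)^2 / x + x) / 2"
      using x by (simp add: field_simps power2_eq_square)
    then have "\<bar>real_of_int k\<bar> * a^2 \<le> ((real_of_int k)^2 / x + x) / 2 * a^2"
      by (rule mult_right_mono) simp
    moreover have "\<bar>real_of_int k\<bar> * (Re (J k))^2 \<le> \<bar>real_of_int k\<bar> * a^2"
      using r by (simp add: mult_left_mono)
    moreover have "(cmod (of_int k * J k))^2 = (real_of_int k)^2 * a^2"
      unfolding a_def by (simp add: norm_mult power_mult_distrib)
    ultimately show ?thesis by (simp add: field_simps flip: a_def)
  qed
  have "(\<Sum>k\<in>K. \<bar>real_of_int k\<bar> * (Re (J k))\<^sup>2) \<le> (\<Sum>k\<in>K. ((cmod (of_int k * J k))^2 / x + x * (cmod (J k))^2) / 2)"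
    by (rule sum_mono) (rule pt)
  also have "\<dots> = ((\<Sum>k\<in>K. (cmod (of_int k * J k))^2) / x + x * (\<Sum>k\<in>K. (cmod (J k))^2)) / 2"
    by (simp add: add_divide_distrib sum.distrib flip: sum_divide_distrib sum_distrib_left)
  also have "\<dots> \<le> (x^2 / x + x * 1) / 2"
    using b0 b1 x by (intro divide_right_mono add_mono mult_left_mono divide_right_mono) auto
  also have "\<dots> = x" using x by (simp add: power2_eq_square)
  finally show ?thesis unfolding J_def .
qed

theorem lemma3p4:
  shows "\<exists>C>0. \<forall>x::real. x > 0 \<longrightarrow>
           (\<lambda>k::int. \<bar>real_of_int k\<bar> * (Re (besselJ k (of_real x)))\<^sup>2) summable_on UNIV \<and>
           (\<Sum>\<^sub>\<infinity>k::int. \<bar>real_of_int k\<bar> * (Re (besselJ k (of_real x)))\<^sup>2) \<le> C * x"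
proof (intro exI[of _ 1] conjI allI impI)
  fix x :: real assume x: "x > 0"
  show sm: "(\<lambda>k::int. \<bar>real_of_int k\<bar> * (Re (besselJ k (of_real x)))\<^sup>2) summable_on UNIV"
    by (rule nonneg_bdd_above_summable_on) (auto intro!: bdd_aboveI[of _ x] finite_bound x)
  show "(\<Sum>\<^sub>\<infinity>k::int. \<bar>real_of_int k\<bar> * (Re (besselJ k (of_real x)))\<^sup>2) \<le> 1 * x"
    using infsum_le_finite_sums[OF sm, of x] finite_bound[OF x] by simp
qed simp
end
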